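(* Let $n,m\ge 1$, $T>0$, $X_0\in\mathbb{R}^n$, and let $A\in\mathbb{R}^{n\times n}$ have only real eigenvalues. Let $\mathcal{U}\subset\mathbb{R}^m$ be a compact convex polytope with $0\in\mathcal{U}$, given as the convex hull of finitely many vertices $u_1,\dots,u_N\in\mathbb{R}^m$. Let $\mathcal{B}\subset\mathbb{R}^{n\times m}$ be compact. Let $d\in\mathbb{R}^n$ with $\|d\|=1$ be an eigenvector of $A^\top$ (with real eigenvalue). Define $P_0 := e^{A^\top T} d$. For each $i\in\{1,\dots,N\}$ choose $$B_i \in \arg\max_{B\in\mathcal{B}} P_0^\top B u_i,$$ and choose $$i^\ast \in \arg\max_{1\le i\le N} P_0^\top B_i u_i .$$ Then $B^\ast := B_{i^\ast}$ satisfies $B^\ast\in\arg\max_{B\in\mathcal{B}} G_d(B)$, where $G_d$ is the directional growth metric defined in the context.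
   Context: For a fixed $B\in\mathcal{B}$ consider the linear control system $\dot X(t)=AX(t)+Bu(t)$, $X(0)=X_0$, $t\in[0,T]$, with measurable controls $u(t)\in\mathcal{U}$. The co-state with terminal condition $P(T)=d$ is $P(t)=e^{A^\top (T-t)}d$, i.e. the solution of $\dot P(t)=-A^\top P(t)$, $P(T)=d$. Let $u_B^\ast(\cdot)$ be any admissible control satisfying $u_B^\ast(t)\in\arg\max_{u\in\mathcal{U}} P(t)^\top B u$ for all $t\in[0,T]$ (the Pontryagin maximum-principle control for the boundary trajectory with terminal co-state $d$), and let $X_{d,B}:=X(T)$ denote the terminal state of the trajectory driven by $u_B^\ast$. Let $c_0:=e^{AT}X_0$ be the endpoint at time $T$ of the zero-input trajectory ($u\equiv 0$). The directional growth metric is $$G_d(B):= d^\top\big(X_{d,B}-c_0\big).$$ *)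

theory Defs
  imports "HOL-Analysis.Analysis"
begin

text \<open>Matrix powers and the matrix exponential e^M = sum_k M^k / k!.\<close>

primrec mat_pow :: "real ^'n^'n \<Rightarrow> nat \<Rightarrow> real ^'n^'n" where
  "mat_pow M 0 = mat 1"
| "mat_pow M (Suc k) = M ** mat_pow M k"

definition mat_exp :: "real ^'n^'n \<Rightarrow> real ^'n^'n" where
  "mat_exp M = (\<Sum>k. (1 / fact k) *\<^sub>R mat_pow M k)"

text \<open>A real square matrix has only real eigenvalues (eigenvalues taken over the complex numbers).\<close>

definition only_real_eigenvalues :: "real ^'n^'n \<Rightarrow> bool" where
  "only_real_eigenvalues A \<longleftrightarrow>
     (\<forall>(z::complex) (v::complex^'n). v \<noteq> 0 \<and>
        (\<chi> i j. complex_of_real (A $ i $ j)) *v v = z *s v \<longrightarrow> z \<in> \<real>)"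

text \<open>Admissible control on [0,T]: Lebesgue measurable with values in U.\<close>

definition admissible :: "real \<Rightarrow> (real ^'m) set \<Rightarrow> (real \<Rightarrow> real ^'m) \<Rightarrow> bool" where
  "admissible T U u \<longleftrightarrow> u \<in> borel_measurable (lebesgue_on {0..T}) \<and> (\<forall>t\<in>{0..T}. u t \<in> U)"

text \<open>Co-state P(t) = e^{A^T (T-t)} d.\<close>

definition costate :: "real ^'n^'n \<Rightarrow> real \<Rightarrow> real ^'n \<Rightarrow> real \<Rightarrow> real ^'n" where
  "costate A T d t = mat_exp ((T - t) *\<^sub>R transpose A) *v d"

text \<open>Pontryagin maximum-principle control for B with terminal co-state d.\<close>

definition pmp_control ::
  "real ^'n^'n \<Rightarrow> real ^'m^'n \<Rightarrow> real \<Rightarrow> (real ^'m) set \<Rightarrow> real ^'n \<Rightarrow> (real \<Rightarrow> real ^'m) \<Rightarrow> bool" where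
  "pmp_control A B T U d u \<longleftrightarrow> admissible T U u \<and>
     (\<forall>t\<in>{0..T}. \<forall>v\<in>U. costate A T d t \<bullet> (B *v v) \<le> costate A T d t \<bullet> (B *v u t))"

text \<open>Terminal state of dX = AX + Bu, X(0)=X0 (variation-of-constants / mild solution).\<close>

definition terminal_state ::
  "real ^'n^'n \<Rightarrow> real ^'m^'n \<Rightarrow> real ^'n \<Rightarrow> real \<Rightarrow> (real \<Rightarrow> real ^'m) \<Rightarrow> real ^'n" where
  "terminal_state A B X0 T u =
     mat_exp (T *\<^sub>R A) *v X0 + integral {0..T} (\<lambda>s. mat_exp ((T - s) *\<^sub>R A) *v (B *v u s))"

text \<open>Directional growth metric G_d(B) = d^T (X_{d,B} - c_0), for the PMP control u.\<close>

definition growth_metric ::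
  "real ^'n^'n \<Rightarrow> real ^'m^'n \<Rightarrow> real ^'n \<Rightarrow> real \<Rightarrow> real ^'n \<Rightarrow> (real \<Rightarrow> real ^'m) \<Rightarrow> real" where
  "growth_metric A B X0 T d u = d \<bullet> (terminal_state A B X0 T u - mat_exp (T *\<^sub>R A) *v X0)"

end

theory Submission
  imports Defs
begin

definition opn :: "real^'m^'n \<Rightarrow> real" where "opn M = onorm ((*v) M)"

lemma opn_mult: "opn (M ** P) \<le> opn M * opn P"
proof -
  have "(*v) (M ** P) = ((*v) M) \<circ> ((*v) P)"
    by (auto simp: fun_eq_iff matrix_vector_mul_assoc)
  then show ?thesis unfolding opn_def
    using onorm_compose[OF matrix_vector_mul_bounded_linear matrix_vector_mul_bounded_linear] by simp
qed

lemma opn_nonneg: "0 \<le> opn M"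
  unfolding opn_def by (rule onorm_pos_le[OF matrix_vector_mul_bounded_linear])

lemma opn_pow: "opn (mat_pow M k) \<le> opn M ^ k"
proof (induction k)
  case 0
  have "(*v) (mat 1 :: real^'n^'n) = (\<lambda>x. x)" by (auto simp: fun_eq_iff)
  then show ?case using onorm_id_le by (simp add: opn_def del: mat_pow.simps) (simp add: \<open>(*v) (mat 1 :: real^'n^'n) = (\<lambda>x. x)\<close>)
next
  case (Suc k)
  have "opn (mat_pow M (Suc k)) \<le> opn M * opn (mat_pow M k)" using opn_mult by simp
  also have "\<dots> \<le> opn M * opn M ^ k" using Suc opn_nonneg[of M] by (simp add: mult_left_mono)
  finally show ?case by simp
qed

lemma norm_le_opn: "norm (M :: real^'n^'n) \<le> real CARD('n) * real CARD('n) * opn M"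
proof -
  have "norm M = L2_set (\<lambda>i. norm (M $ i)) UNIV" by (simp add: norm_vec_def)
  also have "\<dots> \<le> (\<Sum>i\<in>UNIV. norm (M $ i))" by (rule L2_set_le_sum) simp
  also have "\<dots> \<le> (\<Sum>i\<in>(UNIV::'n set). \<Sum>j\<in>UNIV. \<bar>M $ i $ j\<bar>)"
    by (rule sum_mono) (rule norm_le_l1_cart)
  also have "\<dots> \<le> (\<Sum>i\<in>(UNIV::'n set). \<Sum>j\<in>(UNIV::'n set). opn M)"
    by (intro sum_mono) (simp add: opn_def matrix_component_le_onorm)
  finally show ?thesis by simp
qed

lemma mat_pow_scale: "mat_pow (c *\<^sub>R M) k = c ^ k *\<^sub>R mat_pow M k"
  by (induction k) (simp_all add: scalar_matrix_assoc[symmetric] matrix_scalar_ac)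

lemma mat_exp_summable: "summable (\<lambda>k. (1 / fact k) *\<^sub>R mat_pow (M::real^'n^'n) k)"
proof (rule summable_comparison_test)
  let ?C = "real CARD('n) * real CARD('n)"
  show "\<exists>N. \<forall>k\<ge>N. norm ((1 / fact k) *\<^sub>R mat_pow M k) \<le> ?C * (opn M ^ k / fact k)"
  proof (intro exI allI impI)
    fix k :: nat
    have "norm ((1 / fact k) *\<^sub>R mat_pow M k) = norm (mat_pow M k) / fact k" by simp
    also have "\<dots> \<le> ?C * opn (mat_pow M k) / fact k"
      by (intro divide_right_mono norm_le_opn) simp
    also have "\<dots> \<le> ?C * opn M ^ k / fact k"
      by (intro divide_right_mono mult_left_mono opn_pow) simp_all
    finally show "norm ((1 / fact k) *\<^sub>R mat_pow M k) \<le> ?C * (opn M ^ k / fact k)" by simp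
  qed
  show "summable (\<lambda>k. ?C * (opn M ^ k / fact k))"
    using summable_exp_generic[of "opn M"] by (intro summable_mult) (simp add: divide_inverse mult.commute)
qed

lemma scaleR_mv: "(c *\<^sub>R (X::real^'m^'n)) *v v = c *\<^sub>R (X *v v)"
  by (simp add: vec_eq_iff matrix_vector_mult_def sum_distrib_left mult.assoc)

lemma mv_scaleR: "(X::real^'m^'n) *v (c *\<^sub>R v) = c *\<^sub>R (X *v v)"
  by (simp add: vec_eq_iff matrix_vector_mult_def sum_distrib_left mult.left_commute)

lemma vm_scaleR: "(c *\<^sub>R (v::real^'n)) v* (X::real^'m^'n) = c *\<^sub>R (v v* X)"
  by (simp add: vec_eq_iff vector_matrix_mult_def sum_distrib_left mult.assoc)

lemma vm_scaleR2: "(v::real^'n) v* (c *\<^sub>R (X::real^'m^'n)) = c *\<^sub>R (v v* X)"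
  by (simp add: vec_eq_iff vector_matrix_mult_def sum_distrib_left mult.left_commute)

lemma bl_mv: "bounded_linear (\<lambda>X::real^'m^'n. X *v v)"
  apply (rule linear_conv_bounded_linear[THEN iffD1])
  apply (rule linearI)
  apply (simp add: vec_eq_iff matrix_vector_mult_def sum.distrib algebra_simps)
  apply (simp add: scaleR_mv)
  done

lemma bl_vm: "bounded_linear (\<lambda>X::real^'m^'n. v v* X)"
  apply (rule linear_conv_bounded_linear[THEN iffD1])
  apply (rule linearI)
  apply (simp add: vec_eq_iff vector_matrix_mult_def sum.distrib algebra_simps)
  apply (simp add: vm_scaleR2)
  done

lemma exp_real_series: "(\<Sum>k. (\<mu>::real) ^ k / fact k) = exp \<mu>"
  by (simp add: exp_def divide_inverse mult.commute)

lemma mat_exp_eig_right: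
  fixes M :: "real^'n^'n"
  assumes "M *v d = \<mu> *\<^sub>R d"
  shows "mat_exp M *v d = exp \<mu> *\<^sub>R d"
proof -
  have pw: "mat_pow M k *v d = \<mu> ^ k *\<^sub>R d" for k
    by (induction k) (simp_all add: matrix_vector_mul_assoc[symmetric] mv_scaleR assms)
  have "mat_exp M *v d = (\<Sum>k. ((1 / fact k) *\<^sub>R mat_pow M k) *v d)"
    unfolding mat_exp_def by (rule bounded_linear.suminf[OF bl_mv mat_exp_summable])
  also have "\<dots> = (\<Sum>k. ((1 / fact k) * \<mu> ^ k) *\<^sub>R d)"
    by (simp add: scaleR_mv pw)
  also have "\<dots> = (\<Sum>k. (1 / fact k) * \<mu> ^ k) *\<^sub>R d"
    by (rule suminf_scaleR_left[symmetric]) (use summable_exp in \<open>simp add: divide_inverse\<close>)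
  finally show ?thesis by (simp add: exp_real_series)
qed

lemma mat_exp_eig_left:
  fixes M :: "real^'n^'n"
  assumes "d v* M = \<mu> *\<^sub>R d"
  shows "d v* mat_exp M = exp \<mu> *\<^sub>R d"
proof -
  have pw: "d v* mat_pow M k = \<mu> ^ k *\<^sub>R d" for k
  proof (induction k)
    case 0 then show ?case by simp
  next
    case (Suc k)
    have "d v* mat_pow M (Suc k) = (d v* M) v* mat_pow M k"
      by (simp add: vector_matrix_mul_assoc)
    also have "\<dots> = \<mu> ^ Suc k *\<^sub>R d" using Suc by (simp add: assms vm_scaleR)
    finally show ?case .
  qed
  have "d v* mat_exp M = (\<Sum>k. d v* ((1 / fact k) *\<^sub>R mat_pow M k))"
    unfolding mat_exp_def by (rule bounded_linear.suminf[OF bl_vm mat_exp_summable])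
  also have "\<dots> = (\<Sum>k. ((1 / fact k) * \<mu> ^ k) *\<^sub>R d)"
    by (simp add: vm_scaleR2 pw)
  also have "\<dots> = (\<Sum>k. (1 / fact k) * \<mu> ^ k) *\<^sub>R d"
    by (rule suminf_scaleR_left[symmetric]) (use summable_exp in \<open>simp add: divide_inverse\<close>)
  finally show ?thesis by (simp add: exp_real_series)
qed

lemma E_meas: assumes S: "S \<in> sets lebesgue"
  shows "(\<lambda>s. mat_exp ((T - s) *\<^sub>R (A::real^'n^'n))) \<in> borel_measurable (lebesgue_on S)"
proof (rule borel_measurable_LIMSEQ_metric)
  let ?f = "\<lambda>N s. \<Sum>k<N. ((T - s) ^ k / fact k) *\<^sub>R mat_pow A k"
  show "?f N \<in> borel_measurable (lebesgue_on S)" for N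
    by (intro continuous_imp_measurable_on_sets_lebesgue S continuous_intros) auto
  show "(\<lambda>N. ?f N s) \<longlonglongrightarrow> mat_exp ((T - s) *\<^sub>R A)" for s
  proof -
    have "(\<lambda>N. \<Sum>k<N. (1 / fact k) *\<^sub>R mat_pow ((T - s) *\<^sub>R A) k) \<longlonglongrightarrow> mat_exp ((T - s) *\<^sub>R A)"
      unfolding mat_exp_def by (rule summable_LIMSEQ[OF mat_exp_summable])
    then show ?thesis by (simp add: mat_pow_scale)
  qed
qed

lemma E_bound:
  fixes A :: "real^'n^'n"
  assumes "\<bar>c\<bar> \<le> T"
  shows "norm (mat_exp (c *\<^sub>R A)) \<le> real CARD('n) * real CARD('n) * exp (T * opn A)"
proof -
  let ?C = "real CARD('n) * real CARD('n)"
  have T0: "0 \<le> T" using assms by linarith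
  have "norm (mat_exp (c *\<^sub>R A)) \<le> (\<Sum>k. ?C * ((T * opn A) ^ k / fact k))"
    unfolding mat_exp_def
  proof (rule norm_suminf_le)
    fix k
    have "norm ((1 / fact k) *\<^sub>R mat_pow (c *\<^sub>R A) k) = \<bar>c\<bar> ^ k * norm (mat_pow A k) / fact k"
      by (simp add: mat_pow_scale power_abs)
    also have "\<dots> \<le> T ^ k * (?C * opn A ^ k) / fact k"
    proof (intro divide_right_mono mult_mono power_mono)
      show "norm (mat_pow A k) \<le> ?C * opn A ^ k"
        using norm_le_opn[of "mat_pow A k"] opn_pow[of A k]
        by (meson order_trans mult_left_mono of_nat_0_le_iff mult_nonneg_nonneg)
    qed (use assms T0 in auto)
    finally show "norm ((1 / fact k) *\<^sub>R mat_pow (c *\<^sub>R A) k) \<le> ?C * ((T * opn A) ^ k / fact k)"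
      by (simp add: power_mult_distrib mult_ac)
  next
    show "summable (\<lambda>k. ?C * ((T * opn A) ^ k / fact k))"
      using summable_exp_generic[of "T * opn A"] by (intro summable_mult) (simp add: divide_inverse mult.commute)
  qed
  also have "\<dots> = ?C * exp (T * opn A)"
    using summable_exp_generic[of "T * opn A"] exp_real_series[of "T * opn A"]
    by (subst suminf_mult) (simp_all add: divide_inverse mult.commute)
  finally show ?thesis .
qed

lemma opn_le_norm: "opn (M::real^'n^'n) \<le> real CARD('n) * real CARD('n) * norm M"
  unfolding opn_def
proof (rule onorm_le_matrix_component)
  fix i j
  show "\<bar>M $ i $ j\<bar> \<le> norm M"
    using component_le_norm_cart[of "M $ i" j] Finite_Cartesian_Product.norm_nth_le[of M i] by linarith
qed

lemma cont_mv: "continuous_on UNIV (\<lambda>x. fst x *v (snd x :: real^'m) :: real^'n)"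
  unfolding matrix_vector_mult_def by (intro continuous_intros)

lemma key:
  fixes A :: "real^'n^'n" and B :: "real^'m^'n"
  assumes Ubd: "\<forall>v\<in>U. norm v \<le> R"
    and pmp: "pmp_control A B T U d u"
  shows "(\<lambda>s. mat_exp ((T - s) *\<^sub>R A) *v (B *v u s)) integrable_on {0..T}"
    and "growth_metric A B X0 T d u = integral {0..T} (\<lambda>s. d \<bullet> (mat_exp ((T - s) *\<^sub>R A) *v (B *v u s)))"
proof -
  let ?f = "\<lambda>s. mat_exp ((T - s) *\<^sub>R A) *v (B *v u s)"
  let ?C = "real CARD('n) * real CARD('n)"
  have adm: "u \<in> borel_measurable (lebesgue_on {0..T})" "\<forall>t\<in>{0..T}. u t \<in> U"
    using pmp by (auto simp: pmp_control_def admissible_def)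
  have S: "{0..T} \<in> sets lebesgue" by simp
  have m1: "(\<lambda>s. B *v u s) \<in> borel_measurable (lebesgue_on {0..T})"
    by (rule measurable_compose[OF adm(1)]) (intro borel_measurable_continuous_onI continuous_intros)
  have mf: "?f \<in> borel_measurable (lebesgue_on {0..T})"
    using borel_measurable_continuous_Pair[OF E_meas[OF S] m1 cont_mv] by simp
  have bnd: "norm (?f s) \<le> ?C * (?C * exp (T * opn A)) * (opn B * R)" if s: "s \<in> {0..T}" for s
  proof -
    have R0: "0 \<le> R" using Ubd adm(2) s by (meson norm_ge_zero order_trans)
    have "norm (?f s) \<le> opn (mat_exp ((T - s) *\<^sub>R A)) * norm (B *v u s)"
      unfolding opn_def by (rule onorm[OF matrix_vector_mul_bounded_linear])
    also have "\<dots> \<le> (?C * (?C * exp (T * opn A))) * (opn B * R)"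
    proof (rule mult_mono)
      have "opn (mat_exp ((T - s) *\<^sub>R A)) \<le> ?C * norm (mat_exp ((T - s) *\<^sub>R A))"
        by (rule opn_le_norm)
      also have "\<dots> \<le> ?C * (?C * exp (T * opn A))"
        using s by (intro mult_left_mono E_bound) auto
      finally show "opn (mat_exp ((T - s) *\<^sub>R A)) \<le> ?C * (?C * exp (T * opn A))" .
      have "norm (B *v u s) \<le> opn B * norm (u s)"
        unfolding opn_def by (rule onorm[OF matrix_vector_mul_bounded_linear])
      also have "\<dots> \<le> opn B * R"
        using Ubd adm(2) s opn_nonneg by (intro mult_left_mono) auto
      finally show "norm (B *v u s) \<le> opn B * R" .
    qed (use opn_nonneg R0 in auto)
    finally show ?thesis .
  qed
  have "?f absolutely_integrable_on {0..T}"
    by (rule measurable_bounded_by_integrable_imp_absolutely_integrable[OF mf S _ bnd]) auto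
  then show fi: "?f integrable_on {0..T}"
    using set_lebesgue_integral_eq_integral(1) by blast
  have "growth_metric A B X0 T d u = d \<bullet> integral {0..T} ?f"
    by (simp add: growth_metric_def terminal_state_def)
  also have "\<dots> = integral {0..T} ((\<lambda>x. d \<bullet> x) \<circ> ?f)"
    by (rule integral_linear[OF fi bounded_linear_inner_right, symmetric])
  finally show "growth_metric A B X0 T d u = integral {0..T} (\<lambda>s. d \<bullet> (mat_exp ((T - s) *\<^sub>R A) *v (B *v u s)))"
    by (simp add: o_def)
qed

theorem theorem1:
  fixes A :: "real ^'n^'n" and X0 d :: "real ^'n" and T :: real
    and U :: "(real ^'m) set" and N :: nat and uv :: "nat \<Rightarrow> real ^'m"
    and \<B> :: "(real ^'m^'n) set" and Bi :: "nat \<Rightarrow> real ^'m^'n" and istar :: nat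
  assumes T_pos: "T > 0"
    and A_real: "only_real_eigenvalues A"
    and N_pos: "N \<ge> 1"
    and U_hull: "U = convex hull (uv ` {1..N})"
    and zero_U: "0 \<in> U"
    and B_compact: "compact \<B>"
    and d_norm: "norm d = 1"
    and d_eig: "\<exists>lam::real. transpose A *v d = lam *\<^sub>R d"
    and Bi_mem: "\<forall>i\<in>{1..N}. Bi i \<in> \<B>"
    and Bi_max: "\<forall>i\<in>{1..N}. \<forall>B\<in>\<B>.
        (mat_exp (T *\<^sub>R transpose A) *v d) \<bullet> (B *v uv i)
          \<le> (mat_exp (T *\<^sub>R transpose A) *v d) \<bullet> (Bi i *v uv i)"
    and istar_mem: "istar \<in> {1..N}"
    and istar_max: "\<forall>i\<in>{1..N}.
        (mat_exp (T *\<^sub>R transpose A) *v d) \<bullet> (Bi i *v uv i)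
          \<le> (mat_exp (T *\<^sub>R transpose A) *v d) \<bullet> (Bi istar *v uv istar)"
  shows "Bi istar \<in> \<B> \<and>
    (\<forall>ustar. pmp_control A (Bi istar) T U d ustar \<longrightarrow>
       (\<forall>B\<in>\<B>. \<forall>u. pmp_control A B T U d u \<longrightarrow>
          growth_metric A B X0 T d u \<le> growth_metric A (Bi istar) X0 T d ustar))"
proof -
  obtain lam :: real where lam: "transpose A *v d = lam *\<^sub>R d" using d_eig by blast
  have lamL: "d v* A = lam *\<^sub>R d" using lam by simp
  have cost: "costate A T d t = exp ((T - t) * lam) *\<^sub>R d" for t
    unfolding costate_def by (rule mat_exp_eig_right) (simp add: scaleR_mv lamL)
  have P0: "mat_exp (T *\<^sub>R transpose A) *v d = exp (T * lam) *\<^sub>R d"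
    by (rule mat_exp_eig_right) (simp add: scaleR_mv lamL)
  have Eleft: "d \<bullet> (mat_exp ((T - s) *\<^sub>R A) *v w) = exp ((T - s) * lam) * (d \<bullet> w)" for s w
  proof -
    have "d v* mat_exp ((T - s) *\<^sub>R A) = exp ((T - s) * lam) *\<^sub>R d"
      by (rule mat_exp_eig_left) (simp add: vm_scaleR2 lamL)
    then show ?thesis by (simp flip: dot_lmul_matrix)
  qed
  have finU: "finite (uv ` {1..N})" by simp
  have "compact U" unfolding U_hull by (intro compact_convex_hull finite_imp_compact finU)
  then obtain R where Ubd: "\<forall>v\<in>U. norm v \<le> R"
    using compact_imp_bounded bounded_iff by metis
  have pmp_d: "d \<bullet> (B' *v v) \<le> d \<bullet> (B' *v u t)"
    if "pmp_control A B' T U d u" "t \<in> {0..T}" "v \<in> U" for B' u t v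
  proof -
    have "costate A T d t \<bullet> (B' *v v) \<le> costate A T d t \<bullet> (B' *v u t)"
      using that unfolding pmp_control_def by blast
    then have "exp ((T - t) * lam) * (d \<bullet> (B' *v v)) \<le> exp ((T - t) * lam) * (d \<bullet> (B' *v u t))"
      by (simp add: cost)
    then show ?thesis by simp
  qed
  let ?Bs = "Bi istar"
  have ustar_in: "uv istar \<in> U" unfolding U_hull using istar_mem by (intro hull_inc) auto
  have vert: "d \<bullet> (B *v v) \<le> d \<bullet> (?Bs *v uv istar)" if "B \<in> \<B>" "v \<in> U" for B v
  proof -
    let ?c = "d \<bullet> (?Bs *v uv istar)"
    have "U \<subseteq> {v. (d v* B) \<bullet> v \<le> ?c}"
      unfolding U_hull
    proof (rule hull_minimal)
      show "convex {v. (d v* B) \<bullet> v \<le> ?c}" by (rule convex_halfspace_le)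
      show "uv ` {1..N} \<subseteq> {v. (d v* B) \<bullet> v \<le> ?c}"
      proof
        fix x assume "x \<in> uv ` {1..N}"
        then obtain i where i: "i \<in> {1..N}" "x = uv i" by blast
        have h1: "d \<bullet> (B *v uv i) \<le> d \<bullet> (Bi i *v uv i)"
          using Bi_max i(1) that(1) unfolding P0 by simp
        have h2: "d \<bullet> (Bi i *v uv i) \<le> ?c"
          using istar_max i(1) unfolding P0 by simp
        from h1 h2 have "d \<bullet> (B *v uv i) \<le> ?c" by linarith
        then show "x \<in> {v. (d v* B) \<bullet> v \<le> ?c}" using i by (simp add: dot_lmul_matrix)
      qed
    qed
    then show ?thesis using that(2) by (auto simp: dot_lmul_matrix)
  qed
  show ?thesis
  proof (intro conjI allI impI ballI)
    show "?Bs \<in> \<B>" using Bi_mem istar_mem by blast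
    fix ustar B u
    assume us: "pmp_control A ?Bs T U d ustar" and B: "B \<in> \<B>" and u: "pmp_control A B T U d u"
    have uU: "\<forall>t\<in>{0..T}. u t \<in> U" using u by (auto simp: pmp_control_def admissible_def)
    show "growth_metric A B X0 T d u \<le> growth_metric A ?Bs X0 T d ustar"
      unfolding key(2)[OF Ubd u] key(2)[OF Ubd us]
    proof (rule integral_le)
      show "(\<lambda>s. d \<bullet> (mat_exp ((T - s) *\<^sub>R A) *v (B *v u s))) integrable_on {0..T}"
        using integrable_linear[OF key(1)[OF Ubd u] bounded_linear_inner_right[of d]] by (simp add: o_def)
      show "(\<lambda>s. d \<bullet> (mat_exp ((T - s) *\<^sub>R A) *v (?Bs *v ustar s))) integrable_on {0..T}"
        using integrable_linear[OF key(1)[OF Ubd us] bounded_linear_inner_right[of d]] by (simp add: o_def)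
      fix s assume s: "s \<in> {0..T}"
      have "d \<bullet> (B *v u s) \<le> d \<bullet> (?Bs *v uv istar)" using vert B uU s by blast
      also have "\<dots> \<le> d \<bullet> (?Bs *v ustar s)" using pmp_d[OF us s ustar_in] .
      finally show "d \<bullet> (mat_exp ((T - s) *\<^sub>R A) *v (B *v u s)) \<le> d \<bullet> (mat_exp ((T - s) *\<^sub>R A) *v (?Bs *v ustar s))"
        by (simp add: Eleft)
    qed
  qed
qed

end
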